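(* Let $(Q,P)$ be a weakly quasi-lattice ordered group and let $\Lambda$ be a $P$-graph with $\mathrm{FA}(\Lambda)\neq\emptyset$. If $\lambda\in x\in\mathcal{X}(\Lambda)$, then $\lambda^*\cdot x\in\mathcal{X}(\Lambda)$.
   Context: $(Q,P)$ weakly quasi-lattice ordered: $Q$ a discrete group, $P\subseteq Q$ a subsemigroup containing the identity $e$ with $P\cap P^{-1}=\{e\}$, and, with $p\le r$ meaning $pq=r$ for some $q\in P$, any two elements of $P$ with a common upper bound have a least common upper bound. A $P$-graph is a countable small category $\Lambda$ (range/source $r,s$) with a functor $d:\Lambda\to P$ with unique factorisation (if $d(\lambda)=pq$ there are unique $\mu,\nu$ with $\lambda=\mu\nu$, $d(\mu)=p$, $d(\nu)=q$). Write $\lambda\Lambda=\{\lambda\mu: s(\lambda)=r(\mu)\}$, $\mu\preceq\lambda$ iff $\lambda\in\mu\Lambda$. $\mathrm{FA}(\Lambda)$ is the set of $\lambda$ such that for all $\mu\in\lambda\Lambda,\nu\in\Lambda$ there is finite $J\subseteq\Lambda$ with $\mu\Lambda\cap\nu\Lambda=\bigcup_{\kappa\in J}\kappa\Lambda$. A filter is a nonempty hereditary and directed subset of $\Lambda$ (w.r.t. $\preceq$). The path space is $\mathcal{X}(\Lambda)=\{x\text{ filter}: x\cap\mathrm{FA}(\Lambda)\neq\emptyset\}$. For a filter $x$ and $\lambda\in x$, $\lambda^*\cdot x=\{\mu\in\Lambda:\lambda\mu\in x\}$. *)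

theory Defs
  imports "HOL-Algebra.Group" "HOL-Library.Countable_Set"
begin

definition wqlo_le :: "('q, 'm) monoid_scheme \<Rightarrow> 'q set \<Rightarrow> 'q \<Rightarrow> 'q \<Rightarrow> bool" where
  "wqlo_le G P p r \<longleftrightarrow> (\<exists>q\<in>P. p \<otimes>\<^bsub>G\<^esub> q = r)"

definition wqlo :: "('q, 'm) monoid_scheme \<Rightarrow> 'q set \<Rightarrow> bool" where
  "wqlo G P \<longleftrightarrow> group G \<and> P \<subseteq> carrier G \<and> \<one>\<^bsub>G\<^esub> \<in> P
     \<and> (\<forall>p\<in>P. \<forall>q\<in>P. p \<otimes>\<^bsub>G\<^esub> q \<in> P)
     \<and> P \<inter> (\<lambda>p. inv\<^bsub>G\<^esub> p) ` P = {\<one>\<^bsub>G\<^esub>}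
     \<and> (\<forall>p\<in>P. \<forall>r\<in>P. (\<exists>u\<in>P. wqlo_le G P p u \<and> wqlo_le G P r u) \<longrightarrow>
          (\<exists>l\<in>P. wqlo_le G P p l \<and> wqlo_le G P r l \<and>
             (\<forall>u\<in>P. wqlo_le G P p u \<and> wqlo_le G P r u \<longrightarrow> wqlo_le G P l u)))"

text \<open>A small category with object set Obj, morphism set Mor, range rng, source src,
  composition cmp (cmp l m is the composite l m, defined when src l = rng m) and
  identities idt; d is the degree functor into (P, \<otimes>).\<close>
definition P_graph ::
  "('q, 'm) monoid_scheme \<Rightarrow> 'q set \<Rightarrow> 'o set \<Rightarrow> 'a set \<Rightarrow> ('a \<Rightarrow> 'o) \<Rightarrow> ('a \<Rightarrow> 'o)
    \<Rightarrow> ('a \<Rightarrow> 'a \<Rightarrow> 'a) \<Rightarrow> ('o \<Rightarrow> 'a) \<Rightarrow> ('a \<Rightarrow> 'q) \<Rightarrow> bool" where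
  "P_graph G P Obj Mor rng src cmp idt d \<longleftrightarrow>
     countable Obj \<and> countable Mor
     \<and> (\<forall>l\<in>Mor. rng l \<in> Obj \<and> src l \<in> Obj)
     \<and> (\<forall>v\<in>Obj. idt v \<in> Mor \<and> rng (idt v) = v \<and> src (idt v) = v)
     \<and> (\<forall>l\<in>Mor. \<forall>m\<in>Mor. src l = rng m \<longrightarrow>
          cmp l m \<in> Mor \<and> rng (cmp l m) = rng l \<and> src (cmp l m) = src m)
     \<and> (\<forall>l\<in>Mor. \<forall>m\<in>Mor. \<forall>n\<in>Mor. src l = rng m \<longrightarrow> src m = rng n \<longrightarrow>
          cmp (cmp l m) n = cmp l (cmp m n))
     \<and> (\<forall>l\<in>Mor. cmp (idt (rng l)) l = l \<and> cmp l (idt (src l)) = l)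
     \<and> (\<forall>l\<in>Mor. d l \<in> P)
     \<and> (\<forall>v\<in>Obj. d (idt v) = \<one>\<^bsub>G\<^esub>)
     \<and> (\<forall>l\<in>Mor. \<forall>m\<in>Mor. src l = rng m \<longrightarrow> d (cmp l m) = d l \<otimes>\<^bsub>G\<^esub> d m)
     \<and> (\<forall>l\<in>Mor. \<forall>p\<in>P. \<forall>q\<in>P. d l = p \<otimes>\<^bsub>G\<^esub> q \<longrightarrow>
          (\<exists>!mn. fst mn \<in> Mor \<and> snd mn \<in> Mor \<and> src (fst mn) = rng (snd mn)
                \<and> l = cmp (fst mn) (snd mn) \<and> d (fst mn) = p \<and> d (snd mn) = q))"

definition ext_set :: "'a set \<Rightarrow> ('a \<Rightarrow> 'o) \<Rightarrow> ('a \<Rightarrow> 'o) \<Rightarrow> ('a \<Rightarrow> 'a \<Rightarrow> 'a) \<Rightarrow> 'a \<Rightarrow> 'a set" where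
  "ext_set Mor rng src cmp l = {cmp l m | m. m \<in> Mor \<and> src l = rng m}"

definition path_le :: "'a set \<Rightarrow> ('a \<Rightarrow> 'o) \<Rightarrow> ('a \<Rightarrow> 'o) \<Rightarrow> ('a \<Rightarrow> 'a \<Rightarrow> 'a) \<Rightarrow> 'a \<Rightarrow> 'a \<Rightarrow> bool" where
  "path_le Mor rng src cmp m l \<longleftrightarrow> l \<in> ext_set Mor rng src cmp m"

definition FA :: "'a set \<Rightarrow> ('a \<Rightarrow> 'o) \<Rightarrow> ('a \<Rightarrow> 'o) \<Rightarrow> ('a \<Rightarrow> 'a \<Rightarrow> 'a) \<Rightarrow> 'a set" where
  "FA Mor rng src cmp = {l \<in> Mor. \<forall>m\<in>ext_set Mor rng src cmp l. \<forall>n\<in>Mor.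
      \<exists>J. finite J \<and> J \<subseteq> Mor \<and>
        ext_set Mor rng src cmp m \<inter> ext_set Mor rng src cmp n
          = (\<Union>k\<in>J. ext_set Mor rng src cmp k)}"

definition is_filter :: "'a set \<Rightarrow> ('a \<Rightarrow> 'o) \<Rightarrow> ('a \<Rightarrow> 'o) \<Rightarrow> ('a \<Rightarrow> 'a \<Rightarrow> 'a) \<Rightarrow> 'a set \<Rightarrow> bool" where
  "is_filter Mor rng src cmp x \<longleftrightarrow> x \<subseteq> Mor \<and> x \<noteq> {}
     \<and> (\<forall>l\<in>x. \<forall>m\<in>Mor. path_le Mor rng src cmp m l \<longrightarrow> m \<in> x)
     \<and> (\<forall>l\<in>x. \<forall>m\<in>x. \<exists>n\<in>x. path_le Mor rng src cmp l n \<and> path_le Mor rng src cmp m n)"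

definition path_space :: "'a set \<Rightarrow> ('a \<Rightarrow> 'o) \<Rightarrow> ('a \<Rightarrow> 'o) \<Rightarrow> ('a \<Rightarrow> 'a \<Rightarrow> 'a) \<Rightarrow> 'a set set" where
  "path_space Mor rng src cmp = {x. is_filter Mor rng src cmp x \<and> x \<inter> FA Mor rng src cmp \<noteq> {}}"

text \<open>l^* \<cdot> x = {m : l m \<in> x}\<close>
definition shift :: "'a set \<Rightarrow> ('a \<Rightarrow> 'o) \<Rightarrow> ('a \<Rightarrow> 'o) \<Rightarrow> ('a \<Rightarrow> 'a \<Rightarrow> 'a) \<Rightarrow> 'a \<Rightarrow> 'a set \<Rightarrow> 'a set" where
  "shift Mor rng src cmp l x = {m \<in> Mor. src l = rng m \<and> cmp l m \<in> x}"

end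

theory Submission
  imports Defs
begin

locale pgr =
  fixes G :: "('q, 'm) monoid_scheme" and P :: "'q set"
    and Obj :: "'o set" and Mor :: "'a set" and rng src :: "'a \<Rightarrow> 'o"
    and cmp :: "'a \<Rightarrow> 'a \<Rightarrow> 'a" and idt :: "'o \<Rightarrow> 'a" and d :: "'a \<Rightarrow> 'q"
  assumes grp: "group G" and Pc: "P \<subseteq> carrier G"
    and pg: "P_graph G P Obj Mor rng src cmp idt d"
begin

abbreviation E where "E \<equiv> ext_set Mor rng src cmp"

lemma rs: "l \<in> Mor \<Longrightarrow> rng l \<in> Obj \<and> src l \<in> Obj"
  using pg unfolding P_graph_def by blast
lemma idt: "v \<in> Obj \<Longrightarrow> idt v \<in> Mor \<and> rng (idt v) = v \<and> src (idt v) = v"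
  using pg unfolding P_graph_def by blast
lemma cm: "l \<in> Mor \<Longrightarrow> m \<in> Mor \<Longrightarrow> src l = rng m \<Longrightarrow>
   cmp l m \<in> Mor \<and> rng (cmp l m) = rng l \<and> src (cmp l m) = src m"
  using pg unfolding P_graph_def by blast
lemma assoc: "l \<in> Mor \<Longrightarrow> m \<in> Mor \<Longrightarrow> n \<in> Mor \<Longrightarrow> src l = rng m \<Longrightarrow> src m = rng n \<Longrightarrow>
   cmp (cmp l m) n = cmp l (cmp m n)"
  using pg unfolding P_graph_def by blast
lemma unitr: "l \<in> Mor \<Longrightarrow> cmp l (idt (src l)) = l"
  using pg unfolding P_graph_def by blast
lemma dP: "l \<in> Mor \<Longrightarrow> d l \<in> P"
  using pg unfolding P_graph_def by blast
lemma dc: "l \<in> Mor \<Longrightarrow> m \<in> Mor \<Longrightarrow> src l = rng m \<Longrightarrow> d (cmp l m) = d l \<otimes>\<^bsub>G\<^esub> d m"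
  using pg unfolding P_graph_def by blast
lemma uf: "l \<in> Mor \<Longrightarrow> p \<in> P \<Longrightarrow> q \<in> P \<Longrightarrow> d l = p \<otimes>\<^bsub>G\<^esub> q \<Longrightarrow>
   (\<exists>!mn. fst mn \<in> Mor \<and> snd mn \<in> Mor \<and> src (fst mn) = rng (snd mn)
                \<and> l = cmp (fst mn) (snd mn) \<and> d (fst mn) = p \<and> d (snd mn) = q)"
  using pg unfolding P_graph_def by blast

lemma cancel:
  assumes l: "l \<in> Mor" and a: "a \<in> Mor" and b: "b \<in> Mor" and "src l = rng a" "src l = rng b"
    and eq: "cmp l a = cmp l b"
  shows "a = b"
proof -
  have "d l \<otimes>\<^bsub>G\<^esub> d a = d l \<otimes>\<^bsub>G\<^esub> d b" using eq dc assms by metis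
  moreover have "d l \<in> carrier G" "d a \<in> carrier G" "d b \<in> carrier G" using dP Pc l a b by auto
  ultimately have dab: "d a = d b"
    using monoid.Units_l_cancel[OF group.is_monoid[OF grp]] group.Units_eq[OF grp] by blast
  have "cmp l a \<in> Mor" using cm assms by blast
  from uf[OF this dP[OF l] dP[OF a] dc[OF l a]] assms
  have "\<exists>!mn. fst mn \<in> Mor \<and> snd mn \<in> Mor \<and> src (fst mn) = rng (snd mn)
                \<and> cmp l a = cmp (fst mn) (snd mn) \<and> d (fst mn) = d l \<and> d (snd mn) = d a" by blast
  hence "(l, a) = (l, b)" using assms dab by (metis fst_conv snd_conv)
  thus ?thesis by simp
qed

lemma Emem: "m \<in> Mor \<Longrightarrow> \<alpha> \<in> E m \<Longrightarrow> \<alpha> \<in> Mor \<and> rng \<alpha> = rng m"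
  unfolding ext_set_def using cm by auto

lemma Eself: assumes "m \<in> Mor" shows "m \<in> E m"
proof -
  have v: "src m \<in> Obj" using rs assms by blast
  have "m = cmp m (idt (src m))" using unitr assms by simp
  moreover have "idt (src m) \<in> Mor" "src m = rng (idt (src m))" using idt v by auto
  ultimately show ?thesis unfolding ext_set_def by blast
qed

lemma Etrans: assumes "m \<in> Mor" "n \<in> E m" "\<alpha> \<in> E n" shows "\<alpha> \<in> E m"
proof -
  obtain a where a: "a \<in> Mor" "src m = rng a" "n = cmp m a" using assms unfolding ext_set_def by blast
  obtain b where b: "b \<in> Mor" "src n = rng b" "\<alpha> = cmp n b" using assms unfolding ext_set_def by blast
  have "src n = src a" using a cm assms by blast
  hence "\<alpha> = cmp m (cmp a b)" using a b assms assoc by metis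
  moreover have "cmp a b \<in> Mor" "rng (cmp a b) = rng a" using cm a b \<open>src n = src a\<close> by auto
  moreover have "src m = rng (cmp a b)" using a \<open>rng (cmp a b) = rng a\<close> by simp
  ultimately show ?thesis unfolding ext_set_def by blast
qed

lemma Emono: assumes "l \<in> Mor" "m \<in> Mor" "src l = rng m" "\<alpha> \<in> E m"
  shows "cmp l \<alpha> \<in> E (cmp l m)"
proof -
  obtain a where a: "a \<in> Mor" "src m = rng a" "\<alpha> = cmp m a" using assms unfolding ext_set_def by blast
  have "cmp l \<alpha> = cmp (cmp l m) a" using a assms assoc by metis
  thus ?thesis unfolding ext_set_def using a assms cm by auto
qed

lemma Ecancel: assumes "l \<in> Mor" "m \<in> Mor" "src l = rng m" "\<alpha> \<in> Mor" "src l = rng \<alpha>"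
  "cmp l \<alpha> \<in> E (cmp l m)" shows "\<alpha> \<in> E m"
proof -
  obtain a where a: "a \<in> Mor" "src (cmp l m) = rng a" "cmp l \<alpha> = cmp (cmp l m) a"
    using assms unfolding ext_set_def by blast
  have s: "src m = rng a" using a cm assms by auto
  have "cmp l \<alpha> = cmp l (cmp m a)" using a assms assoc s by metis
  hence "\<alpha> = cmp m a" using cancel assms cm a s by metis
  thus ?thesis unfolding ext_set_def using a s by blast
qed

lemma FA_ext: assumes "y \<in> FA Mor rng src cmp" "n \<in> E y" shows "n \<in> FA Mor rng src cmp"
proof -
  have y: "y \<in> Mor" using assms unfolding FA_def by blast
  have "n \<in> Mor" using Emem y assms by blast
  moreover have "E n \<subseteq> E y" using Etrans y assms by blast
  ultimately show ?thesis using assms unfolding FA_def by blast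
qed

lemma FA_shift: assumes fa: "cmp l k \<in> FA Mor rng src cmp" and l: "l \<in> Mor" and k: "k \<in> Mor"
  and s: "src l = rng k" shows "k \<in> FA Mor rng src cmp"
proof -
  have lk: "cmp l k \<in> Mor" using cm l k s by blast
  have "\<exists>J. finite J \<and> J \<subseteq> Mor \<and> E m \<inter> E \<nu> = (\<Union>\<kappa>\<in>J. E \<kappa>)"
    if m: "m \<in> E k" and nu: "\<nu> \<in> Mor" for m \<nu>
  proof -
    have mM: "m \<in> Mor" "rng m = src l" using Emem[OF k m] s by auto
    show ?thesis
    proof (cases "src l = rng \<nu>")
      case False
      have "E m \<inter> E \<nu> = {}" using Emem mM nu False by (metis IntE equals0I)
      thus ?thesis by auto
    next
      case True
      have "cmp l m \<in> E (cmp l k)" using Emono l k s m by blast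
      moreover have "cmp l \<nu> \<in> Mor" using cm l nu True by blast
      ultimately obtain J where J: "finite J" "J \<subseteq> Mor"
        "E (cmp l m) \<inter> E (cmp l \<nu>) = (\<Union>\<kappa>\<in>J. E \<kappa>)"
        using fa unfolding FA_def by blast
      have lm: "cmp l m \<in> Mor" using cm l mM by auto
      have ex: "\<exists>\<kappa>'. \<kappa>' \<in> Mor \<and> src l = rng \<kappa>' \<and> \<kappa> = cmp l \<kappa>'" if "\<kappa> \<in> J" for \<kappa>
      proof -
        have "\<kappa> \<in> E (cmp l m)" using Eself J that by blast
        then obtain t where t: "t \<in> Mor" "src (cmp l m) = rng t" "\<kappa> = cmp (cmp l m) t"
          unfolding ext_set_def by blast
        have st: "src m = rng t" using t cm l mM by auto
        have "\<kappa> = cmp l (cmp m t)" using t st assoc l mM by metis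
        moreover have "cmp m t \<in> Mor" "rng (cmp m t) = src l" using cm mM t st by auto
        ultimately show ?thesis by metis
      qed
      define f where "f \<kappa> = (SOME \<kappa>'. \<kappa>' \<in> Mor \<and> src l = rng \<kappa>' \<and> \<kappa> = cmp l \<kappa>')" for \<kappa>
      have f: "f \<kappa> \<in> Mor \<and> src l = rng (f \<kappa>) \<and> \<kappa> = cmp l (f \<kappa>)" if "\<kappa> \<in> J" for \<kappa>
        unfolding f_def using someI_ex[OF ex[OF that]] .
      have "E m \<inter> E \<nu> = (\<Union>\<kappa>'\<in>f ` J. E \<kappa>')"
      proof (intro equalityI subsetI)
        fix \<alpha> assume a: "\<alpha> \<in> E m \<inter> E \<nu>"
        have aM: "\<alpha> \<in> Mor" "rng \<alpha> = src l" using Emem[OF mM(1)] a mM(2) by auto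
        have "cmp l \<alpha> \<in> E (cmp l m) \<inter> E (cmp l \<nu>)" using Emono[OF l mM(1)] Emono[OF l nu True] a mM(2)[symmetric] by blast
        then obtain \<kappa> where kJ: "\<kappa> \<in> J" "cmp l \<alpha> \<in> E \<kappa>" using J by blast
        have fk: "f \<kappa> \<in> Mor" "src l = rng (f \<kappa>)" "\<kappa> = cmp l (f \<kappa>)" using f[OF kJ(1)] by auto
        have "cmp l \<alpha> \<in> E (cmp l (f \<kappa>))" using fk(3) kJ(2) by metis
        hence "\<alpha> \<in> E (f \<kappa>)" using Ecancel[OF l fk(1) fk(2) aM(1) aM(2)[symmetric]] by blast
        thus "\<alpha> \<in> (\<Union>\<kappa>'\<in>f ` J. E \<kappa>')" using kJ by blast
      next
        fix \<alpha> assume "\<alpha> \<in> (\<Union>\<kappa>'\<in>f ` J. E \<kappa>')"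
        then obtain \<kappa> where kJ: "\<kappa> \<in> J" "\<alpha> \<in> E (f \<kappa>)" by blast
        have fk: "f \<kappa> \<in> Mor" "src l = rng (f \<kappa>)" "\<kappa> = cmp l (f \<kappa>)" using f[OF kJ(1)] by auto
        have aM: "\<alpha> \<in> Mor" "rng \<alpha> = src l" using Emem[OF fk(1) kJ(2)] fk(2) by auto
        have "cmp l \<alpha> \<in> E (cmp l (f \<kappa>))" using Emono[OF l fk(1,2) kJ(2)] .
        hence "cmp l \<alpha> \<in> E \<kappa>" using fk(3) by metis
        hence "cmp l \<alpha> \<in> E (cmp l m) \<inter> E (cmp l \<nu>)" using J kJ by blast
        hence "\<alpha> \<in> E m" "\<alpha> \<in> E \<nu>" using Ecancel[OF l mM(1) _ aM(1)] Ecancel[OF l nu True aM(1)] mM(2)[symmetric] aM(2)[symmetric] by auto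
        thus "\<alpha> \<in> E m \<inter> E \<nu>" by blast
      qed
      moreover have "finite (f ` J)" "f ` J \<subseteq> Mor" using J f by auto
      ultimately show ?thesis by blast
    qed
  qed
  thus ?thesis unfolding FA_def using k by blast
qed

end

theorem lemma5p5:
  fixes G :: "('q, 'm) monoid_scheme" and P :: "'q set"
    and Obj :: "'o set" and Mor :: "'a set" and rng src :: "'a \<Rightarrow> 'o"
    and cmp :: "'a \<Rightarrow> 'a \<Rightarrow> 'a" and idt :: "'o \<Rightarrow> 'a" and d :: "'a \<Rightarrow> 'q"
  assumes "wqlo G P"
    and "P_graph G P Obj Mor rng src cmp idt d"
    and "FA Mor rng src cmp \<noteq> {}"
    and "x \<in> path_space Mor rng src cmp"
    and "l \<in> x"
  shows "shift Mor rng src cmp l x \<in> path_space Mor rng src cmp"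
proof -
  interpret pgr G P Obj Mor rng src cmp idt d
    using assms(1,2) unfolding wqlo_def by (intro pgr.intro) auto
  have fx: "is_filter Mor rng src cmp x" and fa: "x \<inter> FA Mor rng src cmp \<noteq> {}"
    using assms(4) unfolding path_space_def by auto
  have xM: "x \<subseteq> Mor"
    and her: "\<And>a b. a \<in> x \<Longrightarrow> b \<in> Mor \<Longrightarrow> a \<in> E b \<Longrightarrow> b \<in> x"
    and dir: "\<And>a b. a \<in> x \<Longrightarrow> b \<in> x \<Longrightarrow> \<exists>n\<in>x. n \<in> E a \<and> n \<in> E b"
    using fx unfolding is_filter_def path_le_def by blast+
  have lM: "l \<in> Mor" using xM assms(5) by blast
  let ?S = "shift Mor rng src cmp l x"
  have S: "m \<in> ?S \<longleftrightarrow> m \<in> Mor \<and> src l = rng m \<and> cmp l m \<in> x" for m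
    unfolding shift_def by blast
  have "idt (src l) \<in> ?S" using S idt rs lM unitr assms(5) by metis
  hence ne: "?S \<noteq> {}" by blast
  have hs: "n \<in> ?S" if m: "m \<in> ?S" and n: "n \<in> Mor" and nm: "m \<in> E n" for m n
  proof -
    have mM: "m \<in> Mor" "src l = rng m" "cmp l m \<in> x" using S m by auto
    have "rng m = rng n" using Emem n nm by blast
    hence sn: "src l = rng n" using mM by simp
    have "cmp l m \<in> E (cmp l n)" using Emono lM n sn nm by blast
    moreover have "cmp l n \<in> Mor" using cm lM n sn by blast
    ultimately have "cmp l n \<in> x" using her mM by blast
    thus ?thesis using S n sn by blast
  qed
  have ds: "\<exists>n\<in>?S. n \<in> E a \<and> n \<in> E b" if a: "a \<in> ?S" and b: "b \<in> ?S" for a b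
  proof -
    have aM: "a \<in> Mor" "src l = rng a" "cmp l a \<in> x" using S a by auto
    have bM: "b \<in> Mor" "src l = rng b" "cmp l b \<in> x" using S b by auto
    obtain n where n: "n \<in> x" "n \<in> E (cmp l a)" "n \<in> E (cmp l b)" using dir aM bM by blast
    obtain k where k: "k \<in> Mor" "src (cmp l a) = rng k" "n = cmp (cmp l a) k"
      using n unfolding ext_set_def by blast
    have sk: "src a = rng k" using k cm lM aM by auto
    have nk: "n = cmp l (cmp a k)" using k sk assoc lM aM by metis
    have ak: "cmp a k \<in> Mor" "rng (cmp a k) = src l" using cm aM k sk by auto
    have akS: "cmp a k \<in> ?S" using S ak nk n by auto
    have "cmp a k \<in> E a" unfolding ext_set_def using k sk by blast
    moreover have "cmp a k \<in> E b" using Ecancel lM bM ak n nk by metis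
    ultimately show ?thesis using akS by blast
  qed
  obtain y where y: "y \<in> x" "y \<in> FA Mor rng src cmp" using fa by blast
  obtain n where n: "n \<in> x" "n \<in> E l" "n \<in> E y" using dir y assms(5) by blast
  have nFA: "n \<in> FA Mor rng src cmp" using FA_ext y n by blast
  obtain k where k: "k \<in> Mor" "src l = rng k" "n = cmp l k"
    using n unfolding ext_set_def by blast
  have "k \<in> FA Mor rng src cmp" using FA_shift nFA k lM by metis
  moreover have "k \<in> ?S" using S k n by auto
  ultimately have "?S \<inter> FA Mor rng src cmp \<noteq> {}" by blast
  moreover have "is_filter Mor rng src cmp ?S"
    unfolding is_filter_def path_le_def using ne hs ds S by blast
  ultimately show ?thesis unfolding path_space_def by blast
qed

end
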